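(* Let $G=(V,E)$ be a bipartite graph (parallel edges allowed) with capacities $b_v\ge0$, demands $d_{u,e},d_{v,e}\ge0$ and profits $p_e\ge0$ for each edge $e=uv$, such that $d_{v,e}\le b_v$ for all $v$ and $e\in\delta(v)$. Let $M'\subseteq E$ satisfy $\sum_{e\in\delta_{M'}(v)\setminus L(v)}d_{v,e}\le b_v$ for every $v\in V$, where $L(v)$ is a set of the two edges of $\delta_{M'}(v)$ with highest $d_{v,e}$ (or $L(v)=\delta_{M'}(v)$ if $|\delta_{M'}(v)|\le1$). Then one can find $M\subseteq M'$ with $\sum_{e\in\delta_M(v)}d_{v,e}\le b_v$ for all $v\in V$ and $p(M)\ge\frac{p(M')}{7}$.
   Context: $\delta(v)$ is the set of edges incident to $v$, $\delta_{M'}(v)=\delta(v)\cap M'$, $p(M)=\sum_{e\in M}p_e$. *)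

theory Defs
  imports Complex_Main
begin

text \<open>A multigraph: a finite set E of edge identifiers, each with a pair of endpoints
  given by ends :: 'e => 'v * 'v (parallel edges = distinct identifiers with equal ends).\<close>

definition incident :: "('e \<Rightarrow> 'v \<times> 'v) \<Rightarrow> 'v \<Rightarrow> 'e \<Rightarrow> bool" where
  "incident ends v e \<longleftrightarrow> v = fst (ends e) \<or> v = snd (ends e)"

definition delta :: "('e \<Rightarrow> 'v \<times> 'v) \<Rightarrow> 'e set \<Rightarrow> 'v \<Rightarrow> 'e set" where
  "delta ends F v = {e \<in> F. incident ends v e}"

definition bipartite :: "'v set \<Rightarrow> 'e set \<Rightarrow> ('e \<Rightarrow> 'v \<times> 'v) \<Rightarrow> bool" where
  "bipartite V E ends \<longleftrightarrow> (\<forall>e\<in>E. fst (ends e) \<in> V \<and> snd (ends e) \<in> V) \<and>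
     (\<exists>A B. A \<inter> B = {} \<and> A \<union> B = V \<and>
        (\<forall>e\<in>E. (fst (ends e) \<in> A \<and> snd (ends e) \<in> B) \<or> (fst (ends e) \<in> B \<and> snd (ends e) \<in> A)))"

definition top_two :: "('e \<Rightarrow> real) \<Rightarrow> 'e set \<Rightarrow> 'e set \<Rightarrow> bool" where
  "top_two w S L \<longleftrightarrow> L \<subseteq> S \<and> card L = min 2 (card S) \<and>
     (\<forall>e\<in>L. \<forall>f\<in>S - L. w f \<le> w e)"

end

theory Submission
  imports Defs
begin


lemma card1_single: "finite A \<Longrightarrow> card A \<le> 1 \<Longrightarrow> x \<in> A \<Longrightarrow> A = {x}"
  by (auto simp: card_le_Suc0_iff_eq One_nat_def)

lemma card_ins2: "finite X \<Longrightarrow> card X \<le> 1 \<Longrightarrow> Y \<subseteq> insert e X \<Longrightarrow> card Y \<le> 2"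
proof -
  assume "finite X" "card X \<le> 1" "Y \<subseteq> insert e X"
  then have "card Y \<le> card (insert e X)" by (intro card_mono) auto
  also have "\<dots> \<le> Suc (card X)" using \<open>finite X\<close> by (simp add: card_insert_if)
  finally show ?thesis using \<open>card X \<le> 1\<close> by simp
qed

lemma color2:
  fixes F :: "'e set" and ends :: "'e \<Rightarrow> 'v \<times> 'v" and s :: "'v \<Rightarrow> bool"
  assumes "finite F" "\<forall>e\<in>F. s (fst (ends e)) \<noteq> s (snd (ends e))"
    "\<forall>v. card (delta ends F v) \<le> 2"
  shows "\<exists>c::'e \<Rightarrow> bool. \<forall>f\<in>F. \<forall>g\<in>F. f \<noteq> g \<longrightarrow> (\<exists>v. incident ends v f \<and> incident ends v g) \<longrightarrow> c f \<noteq> c g"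
  using assms
proof (induction "card F" arbitrary: F ends rule: less_induct)
  case less
  show ?case
  proof (cases "F = {}")
    case True then show ?thesis by auto
  next
    case False
    then obtain e where eF: "e \<in> F" by auto
    define a where "a = fst (ends e)"
    define b where "b = snd (ends e)"
    have sab: "s a \<noteq> s b" using less.prems(2) eF a_def b_def by auto
    have fin: "\<And>v. finite (delta ends F v)" using less.prems(1) unfolding delta_def by auto
    define Da where "Da = delta ends F a - {e}"
    define Db where "Db = delta ends F b - {e}"
    have eda: "e \<in> delta ends F a" using eF a_def unfolding delta_def incident_def by auto
    have edb: "e \<in> delta ends F b" using eF b_def unfolding delta_def incident_def by auto
    have cDa: "card Da \<le> 1" using less.prems(3)[rule_format, of a] eda fin[of a] unfolding Da_def
      by (simp add: card_Diff_singleton)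
    have cDb: "card Db \<le> 1" using less.prems(3)[rule_format, of b] edb fin[of b] unfolding Db_def
      by (simp add: card_Diff_singleton)
    have finDa: "finite Da" "finite Db" using fin Da_def Db_def by auto
    define N where "N = Da \<union> Db"
    show ?thesis
    proof (cases "card N \<le> 1")
      case True
      note cN = True
      define F0 where "F0 = F - {e}"
      have "card F0 < card F" using eF less.prems(1) unfolding F0_def
        by (meson card_Diff1_less)
      moreover have "finite F0" using less.prems(1) F0_def by auto
      moreover have "\<forall>e\<in>F0. s (fst (ends e)) \<noteq> s (snd (ends e))" using less.prems(2) F0_def by auto
      moreover have "\<forall>v. card (delta ends F0 v) \<le> 2"
      proof
        fix v
        have "delta ends F0 v \<subseteq> delta ends F v" unfolding F0_def delta_def by auto
        then show "card (delta ends F0 v) \<le> 2" using card_mono[OF fin[of v]] less.prems(3) by (meson order_trans)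
      qed
      ultimately have "\<exists>c::'e \<Rightarrow> bool. \<forall>f\<in>F0. \<forall>g\<in>F0. f \<noteq> g \<longrightarrow> (\<exists>v. incident ends v f \<and> incident ends v g) \<longrightarrow> c f \<noteq> c g"
        by (rule less.hyps)
      then obtain c :: "'e \<Rightarrow> bool" where c: "\<forall>f\<in>F0. \<forall>g\<in>F0. f \<noteq> g \<longrightarrow> (\<exists>v. incident ends v f \<and> incident ends v g) \<longrightarrow> c f \<noteq> c g"
        by blast
      have finN: "finite N" using finDa N_def by auto
      obtain x where x: "\<forall>g\<in>N. c g \<noteq> x"
      proof (cases "N = {}")
        case True then show ?thesis using that by auto
      next
        case False
        then obtain g where gN: "g \<in> N" by auto
        then have "N = {g}" using card1_single[OF finN cN gN] by blast
        then show ?thesis using that[of "\<not> c g"] by auto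
      qed
      define c' where "c' = c(e := x)"
      have inc_e: "\<And>v. incident ends v e \<Longrightarrow> v = a \<or> v = b" unfolding incident_def a_def b_def by auto
      show ?thesis
      proof (intro exI[of _ c'] ballI impI)
        fix f g assume fF: "f \<in> F" and gF: "g \<in> F" and fg: "f \<noteq> g"
          and sh: "\<exists>v. incident ends v f \<and> incident ends v g"
        then obtain v where v: "incident ends v f" "incident ends v g" by auto
        show "c' f \<noteq> c' g"
        proof (cases "f = e")
          case True
          then have "g \<in> N" using inc_e[of v] v gF fg unfolding N_def Da_def Db_def delta_def by auto
          then show ?thesis using x True fg c'_def by auto
        next
          case False
          note fe = False
          show ?thesis
          proof (cases "g = e")
            case True
            then have "f \<in> N" using inc_e[of v] v fF fg unfolding N_def Da_def Db_def delta_def by auto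
            then show ?thesis using x True fg c'_def by auto
          next
            case False
            then show ?thesis using fe c fF gF fg v unfolding c'_def F0_def by auto
          qed
        qed
      qed
    next
      case False
      have "Da \<noteq> {}" using False cDb N_def by auto
      then obtain e' where e'Da: "e' \<in> Da" by auto
      then have Da: "Da = {e'}" using card1_single[OF finDa(1) cDa] by blast
      have "Db \<noteq> {}" using False cDa N_def by auto
      then obtain e'' where e''Db: "e'' \<in> Db" by auto
      then have Db: "Db = {e''}" using card1_single[OF finDa(2) cDb] by blast
      have e'e'': "e' \<noteq> e''" using False Da Db N_def by auto
      have dA: "delta ends F a = {e, e'}" using Da eda Da_def by auto
      have dB: "delta ends F b = {e, e''}" using Db edb Db_def by auto
      have e'F: "e' \<in> F" and e''F: "e'' \<in> F" and ee': "e' \<noteq> e" and ee'': "e'' \<noteq> e"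
        using e'Da e''Db unfolding Da_def Db_def delta_def by auto
      have ia: "incident ends a e'" using e'Da unfolding Da_def delta_def by auto
      have ib: "incident ends b e''" using e''Db unfolding Db_def delta_def by auto
      define b' where "b' = (if fst (ends e') = a then snd (ends e') else fst (ends e'))"
      define a'' where "a'' = (if fst (ends e'') = b then snd (ends e'') else fst (ends e''))"
      have se': "s (fst (ends e')) \<noteq> s (snd (ends e'))" using less.prems(2) e'F by auto
      have se'': "s (fst (ends e'')) \<noteq> s (snd (ends e''))" using less.prems(2) e''F by auto
      have inc_e': "\<And>v. incident ends v e' \<longleftrightarrow> v = a \<or> v = b'"
        using ia se' unfolding incident_def b'_def by auto
      have inc_e'': "\<And>v. incident ends v e'' \<longleftrightarrow> v = b \<or> v = a''"
        using ib se'' unfolding incident_def a''_def by auto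
      have inc_e: "\<And>v. incident ends v e \<longleftrightarrow> v = a \<or> v = b" unfolding incident_def a_def b_def by auto
      have sb': "s b' = s b" using ia se' sab unfolding incident_def b'_def by auto
      have sa'': "s a'' = s a" using ib se'' sab unfolding incident_def a''_def by auto
      have ab: "a \<noteq> b" using sab by auto
      have b'a: "b' \<noteq> a" using sb' sab by auto
      have a''b: "a'' \<noteq> b" using sa'' sab by auto
      have a''b': "a'' \<noteq> b'" using sa'' sb' sab by auto
      have b'b: "b' \<noteq> b"
      proof
        assume "b' = b"
        then have "e' \<in> delta ends F b" using e'F inc_e' unfolding delta_def by auto
        then show False using dB ee' e'e'' by auto
      qed
      have a''a: "a'' \<noteq> a"
      proof
        assume "a'' = a"
        then have "e'' \<in> delta ends F a" using e''F inc_e'' unfolding delta_def by auto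
        then show False using dA ee'' e'e'' by auto
      qed
      define F1 where "F1 = F - {e', e''}"
      define ends1 where "ends1 = ends(e := (a'', b'))"
      have eF1: "e \<in> F1" using eF ee' ee'' F1_def by auto
      have inc1: "\<And>v f. f \<in> F1 \<Longrightarrow> f \<noteq> e \<Longrightarrow> incident ends1 v f \<longleftrightarrow> incident ends v f"
        unfolding ends1_def incident_def by auto
      have inc1e: "\<And>v. incident ends1 v e \<longleftrightarrow> v = a'' \<or> v = b'"
        unfolding ends1_def incident_def by auto
      have "card F1 = card F - 2" unfolding F1_def using e'F e''F e'e'' less.prems(1)
        by (subst card_Diff_subset) auto
      moreover have "card F > 0" using eF less.prems(1) card_gt_0_iff by blast
      ultimately have "card F1 < card F" by simp
      moreover have "finite F1" using less.prems(1) F1_def by auto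
      moreover have "\<forall>f\<in>F1. s (fst (ends1 f)) \<noteq> s (snd (ends1 f))"
        using less.prems(2) F1_def ends1_def sa'' sb' sab by auto
      moreover have "\<forall>v. card (delta ends1 F1 v) \<le> 2"
      proof
        fix v
        show "card (delta ends1 F1 v) \<le> 2"
        proof (cases "v = a''")
          case True
          have "delta ends1 F1 v \<subseteq> insert e (delta ends F v - {e''})"
            using inc1 unfolding delta_def F1_def by auto
          moreover have "card (delta ends F v - {e''}) \<le> 1"
            using less.prems(3)[rule_format, of v] fin[of v] True inc_e'' e''F
            by (simp add: card_Diff_singleton delta_def)
          ultimately show ?thesis using fin[of v]
            by (intro card_ins2[of "delta ends F v - {e''}"]) auto
        next
          case False
          note na = False
          show ?thesis
          proof (cases "v = b'")
            case True
            have "delta ends1 F1 v \<subseteq> insert e (delta ends F v - {e'})"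
              using inc1 unfolding delta_def F1_def by auto
            moreover have "card (delta ends F v - {e'}) \<le> 1"
              using less.prems(3)[rule_format, of v] fin[of v] True inc_e' e'F
              by (simp add: card_Diff_singleton delta_def)
            ultimately show ?thesis using fin[of v]
              by (intro card_ins2[of "delta ends F v - {e'}"]) auto
          next
            case False
            have "delta ends1 F1 v \<subseteq> delta ends F v"
              using inc1 inc1e na False unfolding delta_def F1_def by auto
            then show ?thesis using card_mono[OF fin[of v]] less.prems(3) by (meson order_trans)
          qed
        qed
      qed
      ultimately have "\<exists>c::'e \<Rightarrow> bool. \<forall>f\<in>F1. \<forall>g\<in>F1. f \<noteq> g \<longrightarrow> (\<exists>v. incident ends1 v f \<and> incident ends1 v g) \<longrightarrow> c f \<noteq> c g"
        by (rule less.hyps)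
      then obtain c :: "'e \<Rightarrow> bool" where c: "\<forall>f\<in>F1. \<forall>g\<in>F1. f \<noteq> g \<longrightarrow> (\<exists>v. incident ends1 v f \<and> incident ends1 v g) \<longrightarrow> c f \<noteq> c g"
        by blast
      define x where "x = c e"
      define c' where "c' = c(e' := x, e'' := x, e := \<not> x)"
      have key: "c' f \<noteq> c' g" if fF: "f \<in> F" and gF: "g \<in> F" and fg: "f \<noteq> g"
        and vf: "incident ends v f" and vg: "incident ends v g" for f g v
      proof -
        have other: "c' h \<noteq> c' k" if "h \<in> F1" "k \<in> F1" "h \<noteq> e" "k \<noteq> e" "h \<noteq> k"
          "incident ends w h" "incident ends w k" for h k w
        proof -
          have "incident ends1 w h" "incident ends1 w k" using inc1 that by auto
          then have "c h \<noteq> c k" using c that(1,2,5) by blast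
          then show ?thesis using that unfolding c'_def F1_def by auto
        qed
        have c'e: "c' e = (\<not> x)" "c' e' = x" "c' e'' = x" using ee' ee'' e'e'' unfolding c'_def by auto
        have oth: "c' h = c h" if "h \<in> F1" "h \<noteq> e" for h using that unfolding c'_def F1_def by auto
        have lemA: "c' e \<noteq> c' h" if "h \<in> F" "h \<noteq> e" "incident ends w e" "incident ends w h" for h w
        proof -
          have "h \<in> delta ends F a \<or> h \<in> delta ends F b" using that inc_e unfolding delta_def by auto
          then have "h = e' \<or> h = e''" using dA dB that by auto
          then show ?thesis using c'e by auto
        qed
        have lemB: "c' e' \<noteq> c' h" if "h \<in> F" "h \<noteq> e" "h \<noteq> e'" "incident ends w e'" "incident ends w h" for h w
        proof (cases "h = e''")
          case True
          then show ?thesis using that inc_e' inc_e'' a''a a''b' b'b ab by auto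
        next
          case False
          have "w \<noteq> a"
          proof
            assume "w = a" then have "h \<in> delta ends F a" using that unfolding delta_def by auto
            then show False using dA that by auto
          qed
          then have "w = b'" using that inc_e' by auto
          then have "incident ends1 b' h" "h \<in> F1" using that False inc1 F1_def by auto
          then have "c h \<noteq> c e" using c eF1 inc1e that by blast
          then show ?thesis using oth \<open>h \<in> F1\<close> that c'e x_def by auto
        qed
        have lemC: "c' e'' \<noteq> c' h" if "h \<in> F" "h \<noteq> e" "h \<noteq> e''" "incident ends w e''" "incident ends w h" for h w
        proof (cases "h = e'")
          case True
          then show ?thesis using that inc_e' inc_e'' a''a a''b' b'b ab by auto
        next
          case False
          have "w \<noteq> b"
          proof
            assume "w = b" then have "h \<in> delta ends F b" using that unfolding delta_def by auto
            then show False using dB that by auto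
          qed
          then have "w = a''" using that inc_e'' by auto
          then have "incident ends1 a'' h" "h \<in> F1" using that False inc1 F1_def by auto
          then have "c h \<noteq> c e" using c eF1 inc1e that by blast
          then show ?thesis using oth \<open>h \<in> F1\<close> that c'e x_def by auto
        qed
        show ?thesis
        proof (cases "f = e \<or> g = e")
          case True
          then show ?thesis using lemA[of g v] lemA[of f v] fF gF fg vf vg by auto
        next
          case False
          note nfe = False
          show ?thesis
          proof (cases "f = e' \<or> g = e'")
            case True
            then show ?thesis using lemB[of g v] lemB[of f v] fF gF fg vf vg nfe by auto
          next
            case False
            note nfe' = False
            show ?thesis
            proof (cases "f = e'' \<or> g = e''")
              case True
              then show ?thesis using lemC[of g v] lemC[of f v] fF gF fg vf vg nfe by auto
            next
              case False
              then show ?thesis using other[of f g v] nfe nfe' fF gF fg vf vg F1_def by auto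
            qed
          qed
        qed
      qed
      show ?thesis using key by blast
    qed
  qed
qed



lemma maxel: "finite S \<Longrightarrow> S \<noteq> {} \<Longrightarrow> \<exists>x\<in>S. \<forall>y\<in>S. (w::'a \<Rightarrow> real) y \<le> w x"
proof -
  assume "finite S" "S \<noteq> {}"
  then have "Max (w ` S) \<in> w ` S" by simp
  then obtain x where "x \<in> S" "w x = Max (w ` S)" by auto
  then show ?thesis using \<open>finite S\<close> by (metis Max_ge finite_imageI imageI)
qed

lemma top_two_ex: "finite S \<Longrightarrow> \<exists>L. top_two w S L"
proof (cases "card S \<le> 2")
  case True
  then show ?thesis unfolding top_two_def by (intro exI[of _ S]) auto
next
  case False
  assume fS: "finite S"
  then have "S \<noteq> {}" using False by auto
  then obtain e1 where e1: "e1 \<in> S" "\<forall>y\<in>S. w y \<le> w e1" using maxel[OF fS] by blast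
  have "S - {e1} \<noteq> {}"
  proof
    assume "S - {e1} = {}"
    then have "S \<subseteq> {e1}" by auto
    then have "card S \<le> 1" using card_mono[of "{e1}" S] by simp
    then show False using False by simp
  qed
  then obtain e2 where e2: "e2 \<in> S - {e1}" "\<forall>y\<in>S - {e1}. w y \<le> w e2" using maxel[of "S - {e1}" w] fS by blast
  have "top_two w S {e1, e2}" unfolding top_two_def
    using e1 e2 False by auto
  then show ?thesis by blast
qed

lemma sum_Un_le_real: "finite X \<Longrightarrow> finite Y \<Longrightarrow> \<forall>e\<in>X\<union>Y. 0 \<le> (p e::real) \<Longrightarrow> sum p (X \<union> Y) \<le> sum p X + sum p Y"
proof -
  assume a: "finite X" "finite Y" "\<forall>e\<in>X\<union>Y. 0 \<le> (p e::real)"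
  then have "sum p (X \<inter> Y) \<ge> 0" by (intro sum_nonneg) auto
  then show ?thesis using sum_Un[OF a(1,2), of p] by linarith
qed

lemma sum_list_cover: "(\<forall>X\<in>set Xs. finite X) \<Longrightarrow> \<forall>e\<in>\<Union>(set Xs). 0 \<le> (p e::real) \<Longrightarrow>
   sum p (\<Union>(set Xs)) \<le> sum_list (map (sum p) Xs)"
proof (induction Xs)
  case Nil then show ?case by simp
next
  case (Cons X Xs)
  have "sum p (\<Union>(set (X # Xs))) = sum p (X \<union> \<Union>(set Xs))" by simp
  also have "\<dots> \<le> sum p X + sum p (\<Union>(set Xs))"
    using Cons.prems by (intro sum_Un_le_real) auto
  also have "\<dots> \<le> sum p X + sum_list (map (sum p) Xs)" using Cons by auto
  finally show ?case by simp
qed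

theorem lemma6:
  fixes V :: "'v set" and E :: "'e set" and ends :: "'e \<Rightarrow> 'v \<times> 'v"
    and b :: "'v \<Rightarrow> real" and d :: "'v \<Rightarrow> 'e \<Rightarrow> real" and p :: "'e \<Rightarrow> real"
    and M' :: "'e set"
  assumes "finite V" and "finite E"
    and "bipartite V E ends"
    and "\<forall>v\<in>V. b v \<ge> 0"
    and "\<forall>v\<in>V. \<forall>e\<in>delta ends E v. 0 \<le> d v e \<and> d v e \<le> b v"
    and "\<forall>e\<in>E. p e \<ge> 0"
    and "M' \<subseteq> E"
    and "\<forall>v\<in>V. \<forall>L. top_two (d v) (delta ends M' v) L \<longrightarrow>
            (\<Sum>e\<in>delta ends M' v - L. d v e) \<le> b v"
  shows "\<exists>M. M \<subseteq> M' \<and> (\<forall>v\<in>V. (\<Sum>e\<in>delta ends M v. d v e) \<le> b v) \<and>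
             (\<Sum>e\<in>M. p e) \<ge> (\<Sum>e\<in>M'. p e) / 7"
proof -
  note bip = assms(3)[unfolded bipartite_def]
  obtain A B where AB: "A \<inter> B = {}" "A \<union> B = V"
    "\<forall>e\<in>E. (fst (ends e) \<in> A \<and> snd (ends e) \<in> B) \<or> (fst (ends e) \<in> B \<and> snd (ends e) \<in> A)"
    using bip by blast
  have endsV: "\<forall>e\<in>E. fst (ends e) \<in> V \<and> snd (ends e) \<in> V" using bip by blast
  have sides: "\<forall>e\<in>E. (fst (ends e) \<in> A) \<noteq> (snd (ends e) \<in> A)" using AB by blast
  have uniq: "v = w" if "e \<in> E" "incident ends v e" "incident ends w e" "(v \<in> A) = (w \<in> A)" for e v w
    using that sides unfolding incident_def by auto
  have finM': "finite M'" using assms(2,7) finite_subset by blast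
  have findelta: "\<And>X v. X \<subseteq> M' \<Longrightarrow> finite (delta ends X v)"
    using finM' unfolding delta_def by (auto intro: finite_subset)
  have "\<forall>v\<in>V. \<exists>L. top_two (d v) (delta ends M' v) L"
    using top_two_ex findelta by blast
  then obtain L where L: "\<forall>v\<in>V. top_two (d v) (delta ends M' v) (L v)" by (metis bchoice)
  have Lsub: "L v \<subseteq> delta ends M' v" if "v \<in> V" for v using L that unfolding top_two_def by blast
  have Lcard: "card (L v) \<le> 2" if "v \<in> V" for v using L that unfolding top_two_def by auto
  have Lfin: "finite (L v)" if "v \<in> V" for v using Lsub[OF that] findelta[of M' v] finite_subset by blast
  have Lsum: "(\<Sum>e\<in>delta ends M' v - L v. d v e) \<le> b v" if "v \<in> V" for v
    using assms(8) L that by blast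
  have Lmem: "e \<in> M' \<and> incident ends v e" if "v \<in> V" "e \<in> L v" for v e
    using Lsub[OF that(1)] that(2) unfolding delta_def by auto
  have feas: "(\<Sum>e\<in>delta ends M v. d v e) \<le> b v"
    if MM: "M \<subseteq> M'" and vV: "v \<in> V" and cnd: "delta ends M v \<inter> L v = {} \<or> card (delta ends M v) \<le> 1" for M v
  proof -
    have fin: "finite (delta ends M v)" using findelta MM by blast
    have dnn: "\<forall>e\<in>delta ends M' v. 0 \<le> d v e \<and> d v e \<le> b v"
      using assms(5) vV assms(7) unfolding delta_def by auto
    show ?thesis
    proof (cases "delta ends M v \<inter> L v = {}")
      case True
      have sub: "delta ends M v \<subseteq> delta ends M' v - L v" using True MM unfolding delta_def by auto
      have "(\<Sum>e\<in>delta ends M v. d v e) \<le> (\<Sum>e\<in>delta ends M' v - L v. d v e)"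
        using sub dnn findelta[of M' v] by (intro sum_mono2) auto
      then show ?thesis using Lsum[OF vV] by linarith
    next
      case False
      then have c1: "card (delta ends M v) \<le> 1" using cnd by blast
      show ?thesis
      proof (cases "delta ends M v = {}")
        case True then show ?thesis using assms(4) vV by simp
      next
        case False
        then obtain x where x: "x \<in> delta ends M v" by auto
        then have "delta ends M v = {x}" using card1_single[OF fin c1] by blast
        moreover have "x \<in> delta ends M' v" using x MM unfolding delta_def by auto
        ultimately show ?thesis using dnn by simp
      qed
    qed
  qed
  define fA where "fA v = (SOME x. x \<in> L v)" for v
  define Tset where "Tset P = {e\<in>M'. (\<exists>v\<in>V. P v \<and> e \<in> L v) \<and> \<not>(\<exists>v\<in>V. \<not> P v \<and> e \<in> L v)}" for P :: "'v \<Rightarrow> bool"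
  define Ta where "Ta P = {e\<in>Tset P. \<exists>u\<in>V. P u \<and> e \<in> L u \<and> e = fA u}" for P
  define Tb where "Tb P = Tset P - Ta P" for P
  define feasible where "feasible M \<longleftrightarrow> M \<subseteq> M' \<and> (\<forall>v\<in>V. (\<Sum>e\<in>delta ends M v. d v e) \<le> b v)" for M
  have gen: "feasible (Ta P) \<and> feasible (Tb P)"
    if Pu: "\<And>e v w. e \<in> E \<Longrightarrow> incident ends v e \<Longrightarrow> incident ends w e \<Longrightarrow> P v = P w \<Longrightarrow> v = w" for P
  proof -
    have subT: "Ta P \<subseteq> M'" "Tb P \<subseteq> M'" unfolding Ta_def Tb_def Tset_def by auto
    have inL: "e \<in> L v" if hh: "e \<in> Tset P" "v \<in> V" "P v" "incident ends v e" for e v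
    proof -
      obtain u where u: "u \<in> V" "P u" "e \<in> L u" using hh(1) unfolding Tset_def by auto
      have "u = v" using Pu[of e u v] Lmem[OF u(1,3)] assms(7) hh u by auto
      then show ?thesis using u by simp
    qed
    have a: "feasible (Ta P)" unfolding feasible_def
    proof (intro conjI ballI subT)
      fix v assume vV: "v \<in> V"
      show "(\<Sum>e\<in>delta ends (Ta P) v. d v e) \<le> b v"
      proof (cases "P v")
        case True
        have "delta ends (Ta P) v \<subseteq> {fA v}"
        proof
          fix e assume e: "e \<in> delta ends (Ta P) v"
          then obtain u where u: "u \<in> V" "P u" "e \<in> L u" "e = fA u" unfolding delta_def Ta_def by auto
          have "u = v" using Pu[of e u v] Lmem[OF u(1,3)] assms(7) e u True unfolding delta_def by auto
          then show "e \<in> {fA v}" using u by simp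
        qed
        then have "card (delta ends (Ta P) v) \<le> 1" using card_mono[of "{fA v}"] by fastforce
        then show ?thesis using feas subT vV by blast
      next
        case False
        have "delta ends (Ta P) v \<inter> L v = {}" using False vV unfolding delta_def Ta_def Tset_def by auto
        then show ?thesis using feas subT vV by blast
      qed
    qed
    have b: "feasible (Tb P)" unfolding feasible_def
    proof (intro conjI ballI subT)
      fix v assume vV: "v \<in> V"
      show "(\<Sum>e\<in>delta ends (Tb P) v. d v e) \<le> b v"
      proof (cases "P v")
        case True
        have sub: "delta ends (Tb P) v \<subseteq> L v - {fA v}"
        proof
          fix e assume e: "e \<in> delta ends (Tb P) v"
          then have eT: "e \<in> Tset P" "incident ends v e" unfolding delta_def Tb_def by auto
          then have "e \<in> L v" using inL vV True by blast
          moreover have "e \<noteq> fA v" using e vV True \<open>e \<in> L v\<close> unfolding delta_def Tb_def Ta_def by auto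
          ultimately show "e \<in> L v - {fA v}" by simp
        qed
        have "card (delta ends (Tb P) v) \<le> 1"
        proof (cases "L v = {}")
          case True then show ?thesis using sub by simp
        next
          case False
          then have "fA v \<in> L v" unfolding fA_def by (metis some_in_eq)
          then have "card (L v - {fA v}) \<le> 1" using Lcard[OF vV] Lfin[OF vV] by (simp add: card_Diff_singleton)
          then show ?thesis using sub card_mono[of "L v - {fA v}" "delta ends (Tb P) v"] Lfin[OF vV] by simp
        qed
        then show ?thesis using feas subT vV by blast
      next
        case False
        have "delta ends (Tb P) v \<inter> L v = {}" using False vV unfolding delta_def Tb_def Tset_def by auto
        then show ?thesis using feas subT vV by blast
      qed
    qed
    show ?thesis using a b by blast
  qed
  have g1: "feasible (Ta (\<lambda>v. v \<in> A)) \<and> feasible (Tb (\<lambda>v. v \<in> A))"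
    by (rule gen) (use uniq in blast)
  have g2: "feasible (Ta (\<lambda>v. v \<notin> A)) \<and> feasible (Tb (\<lambda>v. v \<notin> A))"
    by (rule gen) (use uniq in blast)
  define \<alpha> where "\<alpha> e \<longleftrightarrow> (\<exists>v\<in>V. v \<in> A \<and> e \<in> L v)" for e
  define \<beta> where "\<beta> e \<longleftrightarrow> (\<exists>v\<in>V. v \<notin> A \<and> e \<in> L v)" for e
  define R where "R = {e\<in>M'. \<not> \<alpha> e \<and> \<not> \<beta> e}"
  define T3 where "T3 = {e\<in>M'. \<alpha> e \<and> \<beta> e}"
  have gR: "feasible R" unfolding feasible_def
  proof (intro conjI ballI)
    show "R \<subseteq> M'" unfolding R_def by auto
    fix v assume vV: "v \<in> V"
    have "delta ends R v \<inter> L v = {}" using vV unfolding R_def delta_def \<alpha>_def \<beta>_def by auto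
    then show "(\<Sum>e\<in>delta ends R v. d v e) \<le> b v" using feas vV \<open>R \<subseteq> M'\<close> by blast
  qed
  have T3L: "delta ends T3 v \<subseteq> L v" if vV: "v \<in> V" for v
  proof
    fix e assume e: "e \<in> delta ends T3 v"
    then have eM: "e \<in> M'" "\<alpha> e" "\<beta> e" "incident ends v e" unfolding delta_def T3_def by auto
    obtain u where u: "u \<in> V" "u \<in> A" "e \<in> L u" using eM \<alpha>_def by auto
    obtain w where w: "w \<in> V" "w \<notin> A" "e \<in> L w" using eM \<beta>_def by auto
    have eE: "e \<in> E" using eM assms(7) by auto
    show "e \<in> L v"
    proof (cases "v \<in> A")
      case True
      then have "u = v" using uniq[OF eE _ eM(4)] Lmem[OF u(1,3)] u by auto
      then show ?thesis using u by simp
    next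
      case False
      then have "w = v" using uniq[OF eE _ eM(4)] Lmem[OF w(1,3)] w by auto
      then show ?thesis using w by simp
    qed
  qed
  have finT3: "finite T3" using finM' unfolding T3_def by auto
  have "\<exists>c::'e \<Rightarrow> bool. \<forall>f\<in>T3. \<forall>g\<in>T3. f \<noteq> g \<longrightarrow> (\<exists>v. incident ends v f \<and> incident ends v g) \<longrightarrow> c f \<noteq> c g"
  proof (rule color2[of T3 "\<lambda>v. v \<in> A"])
    show "finite T3" by (rule finT3)
    show "\<forall>e\<in>T3. (fst (ends e) \<in> A) \<noteq> (snd (ends e) \<in> A)" using sides assms(7) T3_def by auto
    show "\<forall>v. card (delta ends T3 v) \<le> 2"
    proof
      fix v
      show "card (delta ends T3 v) \<le> 2"
      proof (cases "v \<in> V")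
        case True
        then show ?thesis using T3L[OF True] Lcard[OF True] Lfin[OF True] card_mono
          by (metis le_trans)
      next
        case False
        have "delta ends T3 v = {}" using False endsV assms(7) unfolding delta_def T3_def incident_def by auto
        then show ?thesis by simp
      qed
    qed
  qed
  then obtain c :: "'e \<Rightarrow> bool" where c: "\<forall>f\<in>T3. \<forall>g\<in>T3. f \<noteq> g \<longrightarrow> (\<exists>v. incident ends v f \<and> incident ends v g) \<longrightarrow> c f \<noteq> c g"
    by blast
  have gc: "feasible {e\<in>T3. c e = x}" for x unfolding feasible_def
  proof (intro conjI ballI)
    show sb: "{e\<in>T3. c e = x} \<subseteq> M'" unfolding T3_def by auto
    fix v assume vV: "v \<in> V"
    have fin: "finite (delta ends {e\<in>T3. c e = x} v)" using findelta sb by blast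
    have "\<forall>f\<in>delta ends {e\<in>T3. c e = x} v. \<forall>g\<in>delta ends {e\<in>T3. c e = x} v. f = g"
      using c unfolding delta_def by auto
    then have "card (delta ends {e\<in>T3. c e = x} v) \<le> 1" using fin
      by (simp add: card_le_Suc0_iff_eq)
    then show "(\<Sum>e\<in>delta ends {e\<in>T3. c e = x} v. d v e) \<le> b v" using feas vV sb by blast
  qed
  define Xs where "Xs = [R, Ta (\<lambda>v. v \<in> A), Tb (\<lambda>v. v \<in> A), Ta (\<lambda>v. v \<notin> A), Tb (\<lambda>v. v \<notin> A),
     {e\<in>T3. c e = True}, {e\<in>T3. c e = False}]"
  have allf: "\<forall>X\<in>set Xs. feasible X" unfolding Xs_def using g1 g2 gR gc[of True] gc[of False] by simp
  have cover: "M' \<subseteq> \<Union>(set Xs)"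
  proof
    fix e assume e: "e \<in> M'"
    show "e \<in> \<Union>(set Xs)"
    proof (cases "\<alpha> e")
      case True
      show ?thesis
      proof (cases "\<beta> e")
        case True then show ?thesis using e \<open>\<alpha> e\<close> unfolding Xs_def T3_def by auto
      next
        case False
        then have "e \<in> Tset (\<lambda>v. v \<in> A)" using e \<open>\<alpha> e\<close> unfolding Tset_def \<alpha>_def \<beta>_def by auto
        then show ?thesis unfolding Xs_def Tb_def by auto
      qed
    next
      case False
      show ?thesis
      proof (cases "\<beta> e")
        case True
        then have "e \<in> Tset (\<lambda>v. v \<notin> A)" using e \<open>\<not> \<alpha> e\<close> unfolding Tset_def \<alpha>_def \<beta>_def by auto
        then show ?thesis unfolding Xs_def Tb_def by auto
      next
        case False then show ?thesis using e \<open>\<not> \<alpha> e\<close> unfolding Xs_def R_def by auto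
      qed
    qed
  qed
  have subU: "\<Union>(set Xs) \<subseteq> M'" using allf unfolding feasible_def by auto
  have finX: "\<forall>X\<in>set Xs. finite X"
  proof
    fix X assume "X \<in> set Xs"
    then have "X \<subseteq> M'" using subU by auto
    then show "finite X" using finM' by (rule finite_subset)
  qed
  have pnn: "\<forall>e\<in>\<Union>(set Xs). 0 \<le> p e" using subU assms(6,7) by auto
  have "sum p M' \<le> sum p (\<Union>(set Xs))" by (rule sum_mono2[OF finite_subset[OF subU finM'] cover]) (use pnn in auto)
  also have "\<dots> \<le> sum_list (map (sum p) Xs)" by (rule sum_list_cover[OF finX pnn])
  finally have tot: "sum p M' \<le> sum_list (map (sum p) Xs)" .
  have "\<exists>X\<in>set Xs. sum p M' / 7 \<le> sum p X"
  proof (rule ccontr)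
    assume "\<not> ?thesis"
    then have "\<forall>X\<in>set Xs. sum p X < sum p M' / 7" by auto
    then show False using tot unfolding Xs_def by simp
  qed
  then obtain X where "X \<in> set Xs" "sum p M' / 7 \<le> sum p X" by blast
  then show ?thesis using allf unfolding feasible_def by blast
qed

end
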